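(* Let $G=(V,E)$ be a (finite or infinite) graph without isolated edge, and let $L=\{L_v:v\in V\}\cup\{L_e:e\in E\}$ be a set of lists of weights for $G$. For a subgraph $H$ of $G$, let $L_H$ denote the restriction of $L$ to $V(H)\cup E(H)$, i.e. $L_H=\{L_v:v\in V(H)\}\cup\{L_e:e\in E(H)\}$. If every finite induced subgraph $H$ of $G$ that is not isomorphic to $K_2$ has an $L_H$-weighting, then $G$ has an $L$-weighting.
   Context: Graphs are simple and may be infinite; an isolated edge is a connected component isomorphic to $K_2$. Each list is a finite subset of $\{1,\dots,k\}$ for some natural number $k$. For a graph $F$ and a set of lists $M=\{M_v:v\in V(F)\}\cup\{M_e:e\in E(F)\}$, a weighting of $F$ from $M$ is a function $\omega\colon V(F)\cup E(F)\to\mathbb{Z}_{>0}$ with $\omega(v)\in M_v$ and $\omega(e)\in M_e$ for all vertices $v$ and edges $e$ of $F$. The weighted degree of a vertex $v$ in $F$ is $s_\omega(v)=\sum_{w\in N_F(v)}\omega(vw)+\omega(v)$; if $v$ has infinite degree $\kappa$ in $F$ this sum is the cardinal $\kappa$. An $M$-weighting of $F$ is a weighting $\omega$ of $F$ from $M$ such that for every edge $uv$ of $F$, either $s_\omega(u)\neq s_\omega(v)$, or $u$ and $v$ have the same infinite degree in $F$. *)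

theory Defs
  imports Main "HOL-Library.Equipollence"
begin

(* A simple (possibly infinite) graph: vertex set V, symmetric irreflexive
   adjacency relation E on V. Edges are identified with doubletons {u,v}. *)
definition simple_graph :: "'a set \<Rightarrow> ('a \<Rightarrow> 'a \<Rightarrow> bool) \<Rightarrow> bool" where
  "simple_graph V E \<longleftrightarrow> (\<forall>u v. E u v \<longrightarrow> u \<in> V \<and> v \<in> V \<and> u \<noteq> v \<and> E v u)"

definition nbhd :: "'a set \<Rightarrow> ('a \<Rightarrow> 'a \<Rightarrow> bool) \<Rightarrow> 'a \<Rightarrow> 'a set" where
  "nbhd V E v = {w \<in> V. E v w}"

definition induced :: "('a \<Rightarrow> 'a \<Rightarrow> bool) \<Rightarrow> 'a set \<Rightarrow> 'a \<Rightarrow> 'a \<Rightarrow> bool" where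
  "induced E S = (\<lambda>u v. E u v \<and> u \<in> S \<and> v \<in> S)"

definition is_K2 :: "'a set \<Rightarrow> ('a \<Rightarrow> 'a \<Rightarrow> bool) \<Rightarrow> bool" where
  "is_K2 V E \<longleftrightarrow> (\<exists>u v. u \<noteq> v \<and> V = {u, v} \<and> E u v)"

definition has_isolated_edge :: "'a set \<Rightarrow> ('a \<Rightarrow> 'a \<Rightarrow> bool) \<Rightarrow> bool" where
  "has_isolated_edge V E \<longleftrightarrow> (\<exists>u v. E u v \<and> nbhd V E u = {v} \<and> nbhd V E v = {u})"

definition weighting_from ::
  "'a set \<Rightarrow> ('a \<Rightarrow> 'a \<Rightarrow> bool) \<Rightarrow> ('a \<Rightarrow> nat set) \<Rightarrow> ('a set \<Rightarrow> nat set)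
   \<Rightarrow> ('a \<Rightarrow> nat) \<Rightarrow> ('a set \<Rightarrow> nat) \<Rightarrow> bool" where
  "weighting_from V E Lv Le wv we \<longleftrightarrow>
     (\<forall>v \<in> V. wv v \<in> Lv v \<and> wv v > 0) \<and>
     (\<forall>u v. E u v \<longrightarrow> we {u, v} \<in> Le {u, v} \<and> we {u, v} > 0)"

(* weighted degree of a vertex of finite degree *)
definition wdeg :: "'a set \<Rightarrow> ('a \<Rightarrow> 'a \<Rightarrow> bool) \<Rightarrow> ('a \<Rightarrow> nat) \<Rightarrow> ('a set \<Rightarrow> nat) \<Rightarrow> 'a \<Rightarrow> nat" where
  "wdeg V E wv we v = (\<Sum>w \<in> nbhd V E v. we {v, w}) + wv v"

(* s(u) = s(v), where s is the natural number wdeg for vertices of finite degree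
   and the cardinal |N(v)| for vertices of infinite degree *)
definition same_wdeg :: "'a set \<Rightarrow> ('a \<Rightarrow> 'a \<Rightarrow> bool) \<Rightarrow> ('a \<Rightarrow> nat) \<Rightarrow> ('a set \<Rightarrow> nat) \<Rightarrow> 'a \<Rightarrow> 'a \<Rightarrow> bool" where
  "same_wdeg V E wv we u v \<longleftrightarrow>
     (finite (nbhd V E u) \<and> finite (nbhd V E v) \<and> wdeg V E wv we u = wdeg V E wv we v) \<or>
     (infinite (nbhd V E u) \<and> infinite (nbhd V E v) \<and> nbhd V E u \<approx> nbhd V E v)"

definition M_weighting ::
  "'a set \<Rightarrow> ('a \<Rightarrow> 'a \<Rightarrow> bool) \<Rightarrow> ('a \<Rightarrow> nat set) \<Rightarrow> ('a set \<Rightarrow> nat set)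
   \<Rightarrow> ('a \<Rightarrow> nat) \<Rightarrow> ('a set \<Rightarrow> nat) \<Rightarrow> bool" where
  "M_weighting V E Lv Le wv we \<longleftrightarrow> weighting_from V E Lv Le wv we \<and>
     (\<forall>u v. E u v \<longrightarrow>
        \<not> same_wdeg V E wv we u v \<or>
        (infinite (nbhd V E u) \<and> infinite (nbhd V E v) \<and> nbhd V E u \<approx> nbhd V E v))"

end

theory Submission
  imports Defs "HOL-Analysis.Analysis"
begin

lemma open_fin_dep:
  fixes k :: nat and K :: "'i set" and Q :: "('i \<Rightarrow> nat) \<Rightarrow> bool"
  assumes "finite K"
    and dep: "\<forall>x\<in>topspace (product_topology (\<lambda>_. discrete_topology {0..k}) (UNIV::'i set)).
              \<forall>y\<in>topspace (product_topology (\<lambda>_. discrete_topology {0..k}) (UNIV::'i set)).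
              (\<forall>i\<in>K. x i = y i) \<longrightarrow> (Q x \<longleftrightarrow> Q y)"
  shows "openin (product_topology (\<lambda>_. discrete_topology {0..k}) (UNIV::'i set))
           {x \<in> topspace (product_topology (\<lambda>_. discrete_topology {0..k}) (UNIV::'i set)). Q x}"
proof -
  let ?X = "product_topology (\<lambda>_. discrete_topology {0..k}) (UNIV::'i set)"
  show ?thesis
  proof (subst openin_subopen, intro ballI)
    fix x assume x: "x \<in> {x \<in> topspace ?X. Q x}"
    define T where "T = PiE UNIV (\<lambda>i. if i \<in> K then {x i} else {0..k})"
    have xt: "x i \<in> {0..k}" for i using x by auto
    have "openin ?X T"
      unfolding T_def openin_PiE_gen
    proof (rule disjI2, intro conjI)
      show "finite {i \<in> UNIV. (if i \<in> K then {x i} else {0..k}) \<noteq> topspace (discrete_topology {0..k})}"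
        by (rule finite_subset[OF _ assms(1)]) auto
      show "\<forall>i\<in>UNIV. openin (discrete_topology {0..k}) (if i \<in> K then {x i} else {0..k})"
        using xt by auto
    qed
    moreover have "x \<in> T" unfolding T_def using xt by auto
    moreover have "T \<subseteq> {x \<in> topspace ?X. Q x}"
    proof
      fix y assume y: "y \<in> T"
      have yt: "y \<in> topspace ?X" using y xt unfolding T_def
        by (auto simp: PiE_iff split: if_splits) (metis singletonD)
      have "\<forall>i\<in>K. x i = y i" using y unfolding T_def by (auto simp: PiE_iff) (metis singletonD)
      then have "Q y" using dep x yt by blast
      then show "y \<in> {x \<in> topspace ?X. Q x}" using yt by blast
    qed
    ultimately show "\<exists>T. openin ?X T \<and> x \<in> T \<and> T \<subseteq> {x \<in> topspace ?X. Q x}" by blast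
  qed
qed

lemma closed_fin_dep:
  fixes k :: nat and K :: "'i set" and Q :: "('i \<Rightarrow> nat) \<Rightarrow> bool"
  assumes "finite K"
    and dep: "\<forall>x\<in>topspace (product_topology (\<lambda>_. discrete_topology {0..k}) (UNIV::'i set)).
              \<forall>y\<in>topspace (product_topology (\<lambda>_. discrete_topology {0..k}) (UNIV::'i set)).
              (\<forall>i\<in>K. x i = y i) \<longrightarrow> (Q x \<longleftrightarrow> Q y)"
  shows "closedin (product_topology (\<lambda>_. discrete_topology {0..k}) (UNIV::'i set))
           {x \<in> topspace (product_topology (\<lambda>_. discrete_topology {0..k}) (UNIV::'i set)). Q x}"
proof -
  let ?X = "product_topology (\<lambda>_. discrete_topology {0..k}) (UNIV::'i set)"
  have "openin ?X {x \<in> topspace ?X. \<not> Q x}"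
    by (rule open_fin_dep[OF assms(1)]) (use dep in blast)
  moreover have "topspace ?X - {x \<in> topspace ?X. Q x} = {x \<in> topspace ?X. \<not> Q x}" by blast
  ultimately show ?thesis unfolding closedin_def by auto
qed

lemma compact_X: "compact_space (product_topology (\<lambda>_. discrete_topology {0..(k::nat)}) (UNIV::'i set))"
  by (simp add: compact_space_product_topology compact_space_discrete_topology)

lemma K2_card: "is_K2 A R \<Longrightarrow> card A \<le> 2"
  unfolding is_K2_def by (auto simp: card_insert_if)

theorem theorem5:
  fixes V :: "'a set" and E :: "'a \<Rightarrow> 'a \<Rightarrow> bool"
    and Lv :: "'a \<Rightarrow> nat set" and Le :: "'a set \<Rightarrow> nat set" and k :: nat
  assumes "simple_graph V E"
    and "\<not> has_isolated_edge V E"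
    and "\<forall>v \<in> V. Lv v \<subseteq> {1..k}"
    and "\<forall>u v. E u v \<longrightarrow> Le {u, v} \<subseteq> {1..k}"
    and "\<forall>S. S \<subseteq> V \<and> finite S \<and> \<not> is_K2 S (induced E S) \<longrightarrow>
           (\<exists>wv we. M_weighting S (induced E S) Lv Le wv we)"
  shows "\<exists>wv we. M_weighting V E Lv Le wv we"
proof -
  note sg = assms(1)[unfolded simple_graph_def]
  define X where "X = product_topology (\<lambda>_. discrete_topology {0..k}) (UNIV::('a + 'a set) set)"
  define nb where "nb = nbhd V E"
  have nbV: "nb v \<subseteq> V" for v unfolding nb_def nbhd_def by auto
  define S0 where "S0 T = T \<union> \<Union>{nb v | v. v \<in> T \<and> finite (nb v)}" for T
  define P where "P T wv we \<longleftrightarrow>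
      (\<forall>v\<in>T. wv v \<in> Lv v) \<and> (\<forall>u v. u \<in> T \<and> v \<in> T \<and> E u v \<longrightarrow> we {u,v} \<in> Le {u,v}) \<and>
      (\<forall>u v. u \<in> T \<and> v \<in> T \<and> E u v \<and> finite (nb u) \<and> finite (nb v) \<longrightarrow>
          wdeg V E wv we u \<noteq> wdeg V E wv we v)" for T wv we
  define C where "C T = {x \<in> topspace X. P T (\<lambda>v. x (Inl v)) (\<lambda>e. x (Inr e))}" for T
  have S0fin: "finite (S0 T)" if "finite T" for T
    unfolding S0_def using that by auto
  have S0V: "S0 T \<subseteq> V" if "T \<subseteq> V" for T
    unfolding S0_def using that nbV by auto
  have TS0: "T \<subseteq> S0 T" for T unfolding S0_def by auto
  have nbS0: "nb u \<subseteq> S0 T" if "u \<in> T" "finite (nb u)" for u T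
    unfolding S0_def using that by auto
  have Pcong: "P T wv we = P T wv' we'"
    if "\<forall>v\<in>S0 T. wv v = wv' v" "\<forall>e. e \<subseteq> S0 T \<longrightarrow> we e = we' e" for T wv we wv' we'
  proof -
    have wd: "wdeg V E wv we u = wdeg V E wv' we' u" if "u \<in> T" "finite (nb u)" for u
    proof -
      have "\<forall>w\<in>nb u. we {u,w} = we' {u,w}"
      proof
        fix w assume "w \<in> nb u"
        then have "{u,w} \<subseteq> S0 T" using nbS0[OF that] TS0[of T] that(1) by auto
        then show "we {u,w} = we' {u,w}" using \<open>\<forall>e. e \<subseteq> S0 T \<longrightarrow> we e = we' e\<close> by blast
      qed
      then have "(\<Sum>w\<in>nbhd V E u. we {u, w}) = (\<Sum>w\<in>nbhd V E u. we' {u, w})"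
        unfolding nb_def by (intro sum.cong) auto
      moreover have "wv u = wv' u" using TS0 that(1) \<open>\<forall>v\<in>S0 T. wv v = wv' v\<close> by auto
      ultimately show ?thesis unfolding wdeg_def by simp
    qed
    have "\<forall>v\<in>T. wv v = wv' v" using TS0 that(1) by auto
    moreover have "\<forall>u v. u \<in> T \<and> v \<in> T \<longrightarrow> we {u,v} = we' {u,v}" using TS0[of T] that(2) by (simp add: subset_iff)
    moreover have "(\<forall>u v. u \<in> T \<and> v \<in> T \<and> E u v \<and> finite (nb u) \<and> finite (nb v) \<longrightarrow>
          wdeg V E wv we u \<noteq> wdeg V E wv we v) \<longleftrightarrow>
        (\<forall>u v. u \<in> T \<and> v \<in> T \<and> E u v \<and> finite (nb u) \<and> finite (nb v) \<longrightarrow>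
          wdeg V E wv' we' u \<noteq> wdeg V E wv' we' v)"
    proof (intro iff_allI imp_cong refl)
      fix u v assume "u \<in> T \<and> v \<in> T \<and> E u v \<and> finite (nb u) \<and> finite (nb v)"
      then show "(wdeg V E wv we u \<noteq> wdeg V E wv we v) = (wdeg V E wv' we' u \<noteq> wdeg V E wv' we' v)"
        using wd by simp
    qed
    ultimately show ?thesis unfolding P_def by simp
  qed
  have Cclosed: "closedin X (C T)" if "finite T" for T
    unfolding C_def X_def
  proof (rule closed_fin_dep)
    show "finite (Inl ` S0 T \<union> Inr ` Pow (S0 T))" using S0fin[OF that] by auto
    show "\<forall>x\<in>topspace (product_topology (\<lambda>_. discrete_topology {0..k}) UNIV).
       \<forall>y\<in>topspace (product_topology (\<lambda>_. discrete_topology {0..k}) UNIV).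
          (\<forall>i\<in>Inl ` S0 T \<union> Inr ` Pow (S0 T). x i = y i) \<longrightarrow>
          P T (\<lambda>v. x (Inl v)) (\<lambda>e. x (Inr e)) = P T (\<lambda>v. y (Inl v)) (\<lambda>e. y (Inr e))"
      by (intro ballI impI Pcong) auto
  qed
  have Cmono: "C T' \<subseteq> C T" if "T \<subseteq> T'" for T T'
    unfolding C_def P_def using that by blast
  have Cne: "C T \<noteq> {}" if "finite T" "T \<subseteq> V" for T
  proof -
    have "\<exists>S. S0 T \<subseteq> S \<and> S \<subseteq> V \<and> finite S \<and> \<not> is_K2 S (induced E S)"
    proof (cases "is_K2 (S0 T) (induced E (S0 T))")
      case False then show ?thesis using S0fin S0V that by blast
    next
      case True
      then obtain a b where ab: "a \<noteq> b" "S0 T = {a,b}" "E a b"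
        unfolding is_K2_def induced_def by blast
      have "b \<in> nb a" "a \<in> nb b" using ab sg unfolding nb_def nbhd_def by auto
      then obtain w where w: "(w \<in> nb a \<and> w \<noteq> b) \<or> (w \<in> nb b \<and> w \<noteq> a)"
        using assms(2) ab(3) unfolding has_isolated_edge_def nb_def by blast
      have wV: "w \<in> V" "w \<noteq> a" "w \<noteq> b" using w sg unfolding nb_def nbhd_def by auto
      have "card {a,b,w} = 3" using wV ab by auto
      then have "\<not> is_K2 {a,b,w} (induced E {a,b,w})" using K2_card by fastforce
      moreover have "{a,b} \<subseteq> V" using ab S0V[OF that(2)] by auto
      ultimately show ?thesis using ab wV by auto
    qed
    then obtain S where S: "S0 T \<subseteq> S" "S \<subseteq> V" "finite S" "\<not> is_K2 S (induced E S)" by blast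
    then obtain wv we where W: "M_weighting S (induced E S) Lv Le wv we" using assms(5) by blast
    have Wv: "\<forall>v\<in>S. wv v \<in> Lv v" and We: "\<forall>a b. E a b \<and> a \<in> S \<and> b \<in> S \<longrightarrow> we {a,b} \<in> Le {a,b}"
      using W unfolding M_weighting_def weighting_from_def induced_def by blast+
    have TS: "T \<subseteq> S" using TS0[of T] S(1) by blast
    define ed where "ed e \<longleftrightarrow> (\<exists>a b. e = {a,b} \<and> a \<in> S \<and> b \<in> S \<and> E a b)" for e
    define x where "x i = (case i of Inl v \<Rightarrow> if v \<in> S then wv v else 0
                                  | Inr e \<Rightarrow> if ed e then we e else 0)" for i
    have xv: "x (Inl v) = wv v" if "v \<in> S" for v using that unfolding x_def by simp
    have xe: "x (Inr {a,b}) = we {a,b}" if "a \<in> S" "b \<in> S" "E a b" for a b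
      using that unfolding x_def ed_def by auto
    have "x \<in> topspace X"
    proof -
      have "x i \<in> {0..k}" for i
      proof (cases i)
        case (Inl v)
        show ?thesis
        proof (cases "v \<in> S")
          case True then have "wv v \<in> {1..k}" using Wv S(2) assms(3) by blast
          then show ?thesis using True Inl unfolding x_def by auto
        qed (simp add: x_def Inl)
      next
        case (Inr e)
        show ?thesis
        proof (cases "ed e")
          case True
          then obtain a b where "e = {a,b}" "a \<in> S" "b \<in> S" "E a b" unfolding ed_def by blast
          then have "we e \<in> {1..k}" using We assms(4) by blast
          then show ?thesis using True Inr unfolding x_def by auto
        qed (simp add: x_def Inr)
      qed
      then show ?thesis unfolding X_def by auto
    qed
    moreover have "P T (\<lambda>v. x (Inl v)) (\<lambda>e. x (Inr e))"
      unfolding P_def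
    proof (intro conjI allI impI ballI)
      fix v assume "v \<in> T" then have "v \<in> S" using TS by blast
      then show "x (Inl v) \<in> Lv v" using xv Wv by simp
    next
      fix u v assume "u \<in> T \<and> v \<in> T \<and> E u v"
      then have "u \<in> S" "v \<in> S" "E u v" using TS by blast+
      then show "x (Inr {u,v}) \<in> Le {u,v}" using xe[of u v] We by simp
    next
      fix u v assume uv: "u \<in> T \<and> v \<in> T \<and> E u v \<and> finite (nb u) \<and> finite (nb v)"
      have nbeq: "nbhd S (induced E S) z = nb z" if "z \<in> T" "finite (nb z)" for z
        using nbS0[OF that] S(1) S(2) TS that(1) unfolding nb_def nbhd_def induced_def by auto
      have wdeq: "wdeg V E (\<lambda>v. x (Inl v)) (\<lambda>e. x (Inr e)) z = wdeg S (induced E S) wv we z"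
        if "z \<in> T" "finite (nb z)" for z
      proof -
        have "\<forall>w\<in>nb z. x (Inr {z,w}) = we {z,w}"
          using nbS0[OF that] S(1) TS that(1) xe unfolding nb_def nbhd_def by (metis (mono_tags, lifting) mem_Collect_eq subsetD)
        then have "(\<Sum>w\<in>nb z. x (Inr {z,w})) = (\<Sum>w\<in>nb z. we {z,w})" by (intro sum.cong) auto
        moreover have "x (Inl z) = wv z" using xv TS that(1) by auto
        ultimately show ?thesis unfolding wdeg_def nbeq[OF that] by (simp add: nb_def)
      qed
      have fin: "finite (nbhd S (induced E S) z)" for z
        using S(3) unfolding nbhd_def by auto
      have "induced E S u v" using uv TS unfolding induced_def by auto
      then have "\<not> same_wdeg S (induced E S) wv we u v"
        using W fin unfolding M_weighting_def by blast
      then have "wdeg S (induced E S) wv we u \<noteq> wdeg S (induced E S) wv we v"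
        using fin unfolding same_wdeg_def by blast
      then show "wdeg V E (\<lambda>v. x (Inl v)) (\<lambda>e. x (Inr e)) u \<noteq> wdeg V E (\<lambda>v. x (Inl v)) (\<lambda>e. x (Inr e)) v"
        using wdeq uv by simp
    qed
    ultimately show ?thesis unfolding C_def by blast
  qed
  define U where "U = C ` {T. finite T \<and> T \<subseteq> V}"
  have cs: "compact_space X" unfolding X_def by (rule compact_X)
  have cl: "\<forall>c\<in>U. closedin X c" unfolding U_def using Cclosed by blast
  have fp: "\<forall>F. finite F \<and> F \<subseteq> U \<longrightarrow> \<Inter>F \<noteq> {}"
  proof (intro allI impI)
    fix F assume F: "finite F \<and> F \<subseteq> U"
    then obtain \<T> where TT: "\<T> \<subseteq> {T. finite T \<and> T \<subseteq> V}" "finite \<T>" "F = C ` \<T>"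
      unfolding U_def by (meson finite_subset_image)
    have "C (\<Union>\<T>) \<subseteq> C T" if "T \<in> \<T>" for T using that by (intro Cmono) blast
    then have "C (\<Union>\<T>) \<subseteq> \<Inter>F" using TT(3) by blast
    moreover have "C (\<Union>\<T>) \<noteq> {}" using TT by (intro Cne) auto
    ultimately show "\<Inter>F \<noteq> {}" by blast
  qed
  have "\<Inter>U \<noteq> {}" using compact_space_fip[THEN iffD1, OF cs] cl fp by blast
  then obtain x where x: "x \<in> \<Inter>U" by blast
  have xC: "P T (\<lambda>v. x (Inl v)) (\<lambda>e. x (Inr e))" if "finite T" "T \<subseteq> V" for T
    using x that unfolding U_def C_def by blast
  show ?thesis
  proof (intro exI)
    show "M_weighting V E Lv Le (\<lambda>v. x (Inl v)) (\<lambda>e. x (Inr e))"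
      unfolding M_weighting_def weighting_from_def
    proof (intro conjI allI impI ballI)
      fix v assume v: "v \<in> V"
      show "x (Inl v) \<in> Lv v" using xC[of "{v}"] v unfolding P_def by auto
      then show "x (Inl v) > 0" using assms(3) v by fastforce
    next
      fix u v assume uv: "E u v"
      then have "u \<in> V" "v \<in> V" using sg by auto
      then have Puv: "P {u,v} (\<lambda>v. x (Inl v)) (\<lambda>e. x (Inr e))" using xC[of "{u,v}"] by auto
      show "x (Inr {u,v}) \<in> Le {u,v}" using Puv uv unfolding P_def by auto
      then show "x (Inr {u,v}) > 0" using assms(4) uv by fastforce
      show "\<not> same_wdeg V E (\<lambda>v. x (Inl v)) (\<lambda>e. x (Inr e)) u v \<or>
          infinite (nbhd V E u) \<and> infinite (nbhd V E v) \<and> nbhd V E u \<approx> nbhd V E v"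
        using Puv uv unfolding P_def same_wdeg_def nb_def by auto
    qed
  qed
qed

end
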